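(* Let $A\in\mathbb{C}^{n\times n}$ be Hermitian, $\beta>0$, $f(\mathbf{z})=\frac12\mathbf{z}^*A\mathbf{z}+\frac{\beta}{2}\sum_{k}|z_k|^4$, and let $\mathbf{z}\in\mathbb{CS}^{n-1}$ be a stationary point of $\min_{\mathbf{z}\in\mathbb{CS}^{n-1}}f(\mathbf{z})$. Then $\mathbf{z}$ is a local minimizer of $f$ on $\mathbb{CS}^{n-1}$ if and only if there exists a constant $M_{\mathbf{z}}>0$ such that $G(\mathbf{v},t)\ge 0$ for all $\mathbf{v}\in\mathcal{T}_{\mathbf{z}}\cap\mathbb{CS}^{n-1}$ and all $t\in\mathbb{R}$ with $|t|\ge M_{\mathbf{z}}$.
   Context: $\mathbb{CS}^{n-1}$ is the unit sphere of $\mathbb{C}^n$. A point $\mathbf{z}\in\mathbb{CS}^{n-1}$ is stationary if $[A+2\beta\,\mathrm{diag}(|\mathbf{z}|^2)]\mathbf{z}=2\lambda\mathbf{z}$, where $\lambda=\frac12\mathbf{z}^*A\mathbf{z}+\beta\|\mathbf{z}\|_4^4$ and $|\mathbf{z}|^2=(|z_1|^2,\dots,|z_n|^2)$. The tangent space is $\mathcal{T}_{\mathbf{z}}=\{\mathbf{v}\in\mathbb{C}^n:\mathrm{Re}(\mathbf{v}^*\mathbf{z})=0\}$. Define $H_f(\mathbf{z})[\mathbf{v}]=\mathbf{v}^*[A+2\beta\,\mathrm{diag}(|\mathbf{z}|^2)-2\lambda I]\mathbf{v}+4\beta\sum_{k}\mathrm{Re}(v_k\bar z_k)^2$, $H_3(\mathbf{v})=\beta\sum_k(|v_k|^2-|z_k|^2)\mathrm{Re}(\bar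 z_kv_k)$, and $G(\mathbf{v},t)=H_f(\mathbf{z})[\mathbf{v}]\,t^2+4H_3(\mathbf{v})\,t+2[f(\mathbf{v})-f(\mathbf{z})]$. *)

theory Defs
  imports "HOL-Analysis.Analysis"
begin

text \<open>Vectors in C^n are modelled as complex^'n for a finite index type 'n
  (norm is the Euclidean 2-norm); n x n matrices as complex^'n^'n.\<close>

definition hermitian :: "complex^'n^'n \<Rightarrow> bool" where
  "hermitian A \<longleftrightarrow> (\<forall>i j. A$i$j = cnj (A$j$i))"

text \<open>Quadratic form v^* M v (real part; it is real for Hermitian M).\<close>
definition qform :: "complex^'n^'n \<Rightarrow> complex^'n \<Rightarrow> real" where
  "qform M v = Re (\<Sum>i\<in>UNIV. \<Sum>j\<in>UNIV. cnj (v$i) * M$i$j * v$j)"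

definition norm4_4 :: "complex^'n \<Rightarrow> real" where
  "norm4_4 z = (\<Sum>k\<in>UNIV. (cmod (z$k))^4)"

definition fobj :: "complex^'n^'n \<Rightarrow> real \<Rightarrow> complex^'n \<Rightarrow> real" where
  "fobj A \<beta> z = qform A z / 2 + \<beta> / 2 * norm4_4 z"

definition lam :: "complex^'n^'n \<Rightarrow> real \<Rightarrow> complex^'n \<Rightarrow> real" where
  "lam A \<beta> z = qform A z / 2 + \<beta> * norm4_4 z"

definition shifted :: "complex^'n^'n \<Rightarrow> real \<Rightarrow> complex^'n \<Rightarrow> complex^'n^'n" where
  "shifted A \<beta> z = (\<chi> i j. A$i$j + (if i = j then complex_of_real (2 * \<beta> * (cmod (z$i))^2) else 0)
                              - (if i = j then complex_of_real (2 * lam A \<beta> z) else 0))"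

definition stationary :: "complex^'n^'n \<Rightarrow> real \<Rightarrow> complex^'n \<Rightarrow> bool" where
  "stationary A \<beta> z \<longleftrightarrow> norm z = 1 \<and>
     (\<forall>i. (\<Sum>j\<in>UNIV. A$i$j * z$j) + complex_of_real (2 * \<beta> * (cmod (z$i))^2) * z$i
          = complex_of_real (2 * lam A \<beta> z) * z$i)"

definition tangent :: "complex^'n \<Rightarrow> complex^'n \<Rightarrow> bool" where
  "tangent z v \<longleftrightarrow> Re (\<Sum>k\<in>UNIV. cnj (v$k) * z$k) = 0"

definition Hf :: "complex^'n^'n \<Rightarrow> real \<Rightarrow> complex^'n \<Rightarrow> complex^'n \<Rightarrow> real" where
  "Hf A \<beta> z v = qform (shifted A \<beta> z) v + 4 * \<beta> * (\<Sum>k\<in>UNIV. (Re (v$k * cnj (z$k)))^2)"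

definition H3 :: "real \<Rightarrow> complex^'n \<Rightarrow> complex^'n \<Rightarrow> real" where
  "H3 \<beta> z v = \<beta> * (\<Sum>k\<in>UNIV. ((cmod (v$k))^2 - (cmod (z$k))^2) * Re (cnj (z$k) * v$k))"

definition Gfun :: "complex^'n^'n \<Rightarrow> real \<Rightarrow> complex^'n \<Rightarrow> complex^'n \<Rightarrow> real \<Rightarrow> real" where
  "Gfun A \<beta> z v t = Hf A \<beta> z v * t^2 + 4 * H3 \<beta> z v * t + 2 * (fobj A \<beta> v - fobj A \<beta> z)"

definition local_min_sphere :: "complex^'n^'n \<Rightarrow> real \<Rightarrow> complex^'n \<Rightarrow> bool" where
  "local_min_sphere A \<beta> z \<longleftrightarrow> norm z = 1 \<and>
     (\<exists>\<epsilon>>0. \<forall>w. norm w = 1 \<and> dist w z < \<epsilon> \<longrightarrow> fobj A \<beta> z \<le> fobj A \<beta> w)"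

end

theory Submission
  imports Defs
begin

lemma normsq: "norm (x::complex^'n) ^2 = (\<Sum>i\<in>UNIV. cmod (x$i)^2)"
  by (simp add: norm_vec_def L2_set_def sum_nonneg)
lemma inner_eq: "(x::complex^'n) \<bullet> y = (\<Sum>i\<in>UNIV. Re (cnj (x$i) * y$i))"
  by (simp add: inner_vec_def inner_complex_def)

lemma cmod_add_sq: "(cmod (a + of_real s * b))^2 = (cmod a)^2 + 2 * s * Re (cnj a * b) + s^2 * (cmod b)^2"
  unfolding cmod_power2 by (simp add: power2_eq_square algebra_simps)

lemma qform_scale: "qform M (c *\<^sub>R u) = c^2 * qform M u"
proof -
  have "(\<Sum>i\<in>UNIV. \<Sum>j\<in>UNIV. cnj ((c *\<^sub>R u)$i) * M$i$j * (c *\<^sub>R u)$j)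
     = of_real (c^2) * (\<Sum>i\<in>UNIV. \<Sum>j\<in>UNIV. cnj (u$i) * M$i$j * u$j)"
    unfolding vector_scaleR_component
    by (simp add: sum_distrib_left scaleR_conv_of_real power2_eq_square algebra_simps)
  then show ?thesis unfolding qform_def by (simp del: of_real_power)
qed

lemma norm4_scale: "norm4_4 (c *\<^sub>R u) = c^4 * norm4_4 u"
  by (simp add: norm4_4_def sum_distrib_left power_mult_distrib abs_mult power_even_abs_numeral)

lemma comp_add: "(z + s *\<^sub>R v)$i = z$i + of_real s * (v$i :: complex)"
  by (simp only: vector_add_component vector_scaleR_component) (simp add: scaleR_conv_of_real)

lemma qform_add:
  assumes "hermitian A"
  shows "qform A (z + s *\<^sub>R v) = qform A z + 2 * s * Re (\<Sum>i\<in>UNIV. cnj (v$i) * (\<Sum>j\<in>UNIV. A$i$j * z$j)) + s^2 * qform A v"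
proof -
  let ?X = "\<Sum>i\<in>UNIV. \<Sum>j\<in>UNIV. cnj (z$i) * A$i$j * v$j"
  let ?Y = "\<Sum>i\<in>UNIV. \<Sum>j\<in>UNIV. cnj (v$i) * A$i$j * z$j"
  have e: "(\<Sum>i\<in>UNIV. \<Sum>j\<in>UNIV. cnj ((z + s *\<^sub>R v)$i) * A$i$j * (z + s *\<^sub>R v)$j)
     = (\<Sum>i\<in>UNIV. \<Sum>j\<in>UNIV. cnj (z$i) * A$i$j * z$j) + of_real s * (?X + ?Y)
       + of_real (s^2) * (\<Sum>i\<in>UNIV. \<Sum>j\<in>UNIV. cnj (v$i) * A$i$j * v$j)"
  proof -
    have pt: "cnj ((z + s *\<^sub>R v)$i) * A$i$j * (z + s *\<^sub>R v)$j
      = cnj (z$i) * A$i$j * z$j + of_real s * (cnj (z$i) * A$i$j * v$j + cnj (v$i) * A$i$j * z$j)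
        + of_real (s^2) * (cnj (v$i) * A$i$j * v$j)" for i j
      unfolding comp_add complex_cnj_add complex_cnj_mult complex_cnj_complex_of_real power2_eq_square of_real_mult
      by algebra
    show ?thesis unfolding pt by (simp add: sum.distrib sum_distrib_left ring_distribs)
  qed
  have "cnj ?X = (\<Sum>i\<in>UNIV. \<Sum>j\<in>UNIV. cnj (v$j) * A$j$i * z$i)"
  proof -
    have h: "cnj (A$i$j) = A$j$i" for i j using assms unfolding hermitian_def
      by (metis complex_cnj_cnj)
    show ?thesis by (simp add: cnj_sum h mult.commute mult.left_commute)
  qed
  also have "\<dots> = ?Y" by (rule sum.swap)
  finally have "Re (cnj ?X) = Re ?Y" by (simp only:)
  then have "Re ?X = Re ?Y" by (simp only: cnj.sel)
  moreover have "?Y = (\<Sum>i\<in>UNIV. cnj (v$i) * (\<Sum>j\<in>UNIV. A$i$j * z$j))"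
    by (simp add: sum_distrib_left mult.assoc)
  ultimately show ?thesis
  proof -
    assume a1: "Re ?X = Re ?Y" and a2: "?Y = (\<Sum>i\<in>UNIV. cnj (v$i) * (\<Sum>j\<in>UNIV. A$i$j * z$j))"
    have r: "Re (complex_of_real a * w) = a * Re w" for a w by simp
    show ?thesis unfolding qform_def e plus_complex.sel r a1 a2[symmetric] by (simp add: algebra_simps)
  qed
qed

lemma norm4_add:
  "norm4_4 (z + s *\<^sub>R v) = norm4_4 z
     + 4 * s * (\<Sum>k\<in>UNIV. (cmod (z$k))^2 * Re (cnj (z$k) * v$k))
     + s^2 * (4 * (\<Sum>k\<in>UNIV. (Re (cnj (z$k) * v$k))^2) + 2 * (\<Sum>k\<in>UNIV. (cmod (z$k))^2 * (cmod (v$k))^2))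
     + 4 * s^3 * (\<Sum>k\<in>UNIV. Re (cnj (z$k) * v$k) * (cmod (v$k))^2)
     + s^4 * norm4_4 v"
proof -
  have pt: "(cmod ((z + s *\<^sub>R v)$k))^4 = (cmod (z$k))^4
     + 4 * s * ((cmod (z$k))^2 * Re (cnj (z$k) * v$k))
     + s^2 * (4 * (Re (cnj (z$k) * v$k))^2 + 2 * ((cmod (z$k))^2 * (cmod (v$k))^2))
     + 4 * s^3 * (Re (cnj (z$k) * v$k) * (cmod (v$k))^2)
     + s^4 * (cmod (v$k))^4" for k
  proof -
    have "(cmod ((z + s *\<^sub>R v)$k))^4 = ((cmod ((z + s *\<^sub>R v)$k))^2)^2" by simp
    also have "\<dots> = ((cmod (z$k))^2 + 2 * s * Re (cnj (z$k) * v$k) + s^2 * (cmod (v$k))^2)^2"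
      unfolding comp_add cmod_add_sq ..
    also have "\<dots> = (cmod (z$k))^4
     + 4 * s * ((cmod (z$k))^2 * Re (cnj (z$k) * v$k))
     + s^2 * (4 * (Re (cnj (z$k) * v$k))^2 + 2 * ((cmod (z$k))^2 * (cmod (v$k))^2))
     + 4 * s^3 * (Re (cnj (z$k) * v$k) * (cmod (v$k))^2)
     + s^4 * (cmod (v$k))^4"
      by (simp add: power2_eq_square power4_eq_xxxx power3_eq_cube algebra_simps)
    finally show ?thesis .
  qed
  show ?thesis unfolding norm4_4_def pt
    by (simp add: sum.distrib sum_distrib_left distrib_left)
qed

lemma cross_stat:
  assumes "stationary A \<beta> z" and "tangent z v"
  shows "Re (\<Sum>i\<in>UNIV. cnj (v$i) * (\<Sum>j\<in>UNIV. A$i$j * z$j))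
     = - 2 * \<beta> * (\<Sum>k\<in>UNIV. (cmod (z$k))^2 * Re (cnj (z$k) * v$k))"
proof -
  have st: "(\<Sum>j\<in>UNIV. A$i$j * z$j) = complex_of_real (2 * lam A \<beta> z) * z$i - complex_of_real (2 * \<beta> * (cmod (z$i))^2) * z$i" for i
    using assms(1) unfolding stationary_def by (metis add_diff_cancel_right')
  have pt: "Re (cnj (v$i) * (\<Sum>j\<in>UNIV. A$i$j * z$j)) = 2 * lam A \<beta> z * Re (cnj (v$i) * z$i)
      - 2 * \<beta> * ((cmod (z$i))^2 * Re (cnj (z$i) * v$i))" for i
    unfolding st by (simp add: algebra_simps)
  have t: "(\<Sum>i\<in>UNIV. Re (cnj (v$i) * z$i)) = 0" using assms(2) unfolding tangent_def by simp
  have "Re (\<Sum>i\<in>UNIV. cnj (v$i) * (\<Sum>j\<in>UNIV. A$i$j * z$j))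
     = (\<Sum>i\<in>UNIV. Re (cnj (v$i) * (\<Sum>j\<in>UNIV. A$i$j * z$j)))" by (rule Re_sum)
  also have "\<dots> = (\<Sum>i\<in>UNIV. 2 * lam A \<beta> z * Re (cnj (v$i) * z$i)
      - 2 * \<beta> * ((cmod (z$i))^2 * Re (cnj (z$i) * v$i)))" using pt by simp
  also have "\<dots> = 2 * lam A \<beta> z * (\<Sum>i\<in>UNIV. Re (cnj (v$i) * z$i))
      - 2 * \<beta> * (\<Sum>i\<in>UNIV. (cmod (z$i))^2 * Re (cnj (z$i) * v$i))"
    by (simp add: sum_subtractf sum_distrib_left)
  finally show ?thesis unfolding t by simp
qed

lemma qform_shifted:
  "qform (shifted A \<beta> z) v = qform A v + (\<Sum>i\<in>UNIV. (2 * \<beta> * (cmod (z$i))^2 - 2 * lam A \<beta> z) * (cmod (v$i))^2)"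
proof -
  have sh: "shifted A \<beta> z $ i $ j = A$i$j + (if i = j then complex_of_real (2 * \<beta> * (cmod (z$i))^2 - 2 * lam A \<beta> z) else 0)" for i j
    unfolding shifted_def by auto
  have pt: "(\<Sum>j\<in>UNIV. cnj (v$i) * shifted A \<beta> z $ i $ j * v$j)
     = (\<Sum>j\<in>UNIV. cnj (v$i) * A $ i $ j * v$j) + cnj (v$i) * complex_of_real (2 * \<beta> * (cmod (z$i))^2 - 2 * lam A \<beta> z) * v$i" for i
  proof -
    have "cnj (v$i) * shifted A \<beta> z $ i $ j * v$j = cnj (v$i) * A $ i $ j * v$j
      + (if j = i then cnj (v$i) * complex_of_real (2 * \<beta> * (cmod (z$i))^2 - 2 * lam A \<beta> z) * v$i else 0)" for j
      unfolding sh by (auto simp: ring_distribs)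
    then show ?thesis by (simp add: sum.distrib)
  qed
  have r: "Re (cnj w * complex_of_real c * w) = c * (cmod w)^2" for w c
    unfolding cmod_power2 by (simp add: power2_eq_square algebra_simps)
  show ?thesis unfolding qform_def pt sum.distrib plus_complex.sel Re_sum r ..
qed

lemma alg_core:
  fixes s qu X qv q0 \<beta> a Qu Q0 S2 P b Qv hf l h3 fv fz :: real
  assumes "qu = q0 + 2 * s * X + s^2 * qv" "X = -2 * \<beta> * a"
    "Qu = Q0 + 4 * s * a + s^2 * (4 * S2 + 2 * P) + 4 * s^3 * b + s^4 * Qv"
    "hf = qv + (2 * \<beta> * P - 2 * l) + 4 * \<beta> * S2" "l = q0/2 + \<beta> * Q0" "h3 = \<beta> * (b - a)"
    "fv = qv/2 + \<beta>/2 * Qv" "fz = q0/2 + \<beta>/2 * Q0"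
  shows "(1+s^2) * qu + \<beta> * Qu - (1+s^2)^2 * (q0 + \<beta> * Q0) = s^2 * hf + 4 * s^3 * h3 + 2 * s^4 * (fv - fz)"
  unfolding assms(1,3,4,6,7,8) unfolding assms(2,5)
  by (simp add: power2_eq_square power3_eq_cube power4_eq_xxxx algebra_simps)

lemma lemB:
  assumes "hermitian A" "stationary A \<beta> z" "tangent z v" "norm v = 1"
  shows "(1+s^2) * qform A (z + s *\<^sub>R v) + \<beta> * norm4_4 (z + s *\<^sub>R v)
     - (1+s^2)^2 * (qform A z + \<beta> * norm4_4 z)
   = s^2 * Hf A \<beta> z v + 4 * s^3 * H3 \<beta> z v + 2 * s^4 * (fobj A \<beta> v - fobj A \<beta> z)"
proof (rule alg_core[OF qform_add[OF assms(1)] cross_stat[OF assms(2,3)] norm4_add])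
  have v1: "(\<Sum>i\<in>UNIV. (cmod (v$i))^2) = 1" using normsq[of v] assms(4) by simp
  have "(\<Sum>i\<in>UNIV. (2 * \<beta> * (cmod (z$i))^2 - 2 * lam A \<beta> z) * (cmod (v$i))^2)
     = 2 * \<beta> * (\<Sum>i\<in>UNIV. (cmod (z$i))^2 * (cmod (v$i))^2) - 2 * lam A \<beta> z * (\<Sum>i\<in>UNIV. (cmod (v$i))^2)"
    by (simp add: sum_subtractf sum_distrib_left left_diff_distrib mult.assoc)
  also have "\<dots> = 2 * \<beta> * (\<Sum>i\<in>UNIV. (cmod (z$i))^2 * (cmod (v$i))^2) - 2 * lam A \<beta> z" using v1 by simp
  finally have e: "(\<Sum>i\<in>UNIV. (2 * \<beta> * (cmod (z$i))^2 - 2 * lam A \<beta> z) * (cmod (v$i))^2)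
     = 2 * \<beta> * (\<Sum>i\<in>UNIV. (cmod (z$i))^2 * (cmod (v$i))^2) - 2 * lam A \<beta> z" .
  have c: "Re (v$k * cnj (z$k)) = Re (cnj (z$k) * v$k)" for k by (simp add: mult.commute)
  show "Hf A \<beta> z v = qform A v + (2 * \<beta> * (\<Sum>i\<in>UNIV. (cmod (z$i))^2 * (cmod (v$i))^2) - 2 * lam A \<beta> z)
     + 4 * \<beta> * (\<Sum>k\<in>UNIV. (Re (cnj (z$k) * v$k))^2)"
    unfolding Hf_def qform_shifted e c ..
  show "lam A \<beta> z = qform A z / 2 + \<beta> * norm4_4 z" by (simp add: lam_def)
  show "H3 \<beta> z v = \<beta> * ((\<Sum>k\<in>UNIV. Re (cnj (z$k) * v$k) * (cmod (v$k))^2) - (\<Sum>k\<in>UNIV. (cmod (z$k))^2 * Re (cnj (z$k) * v$k)))"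
    unfolding H3_def by (simp add: sum_subtractf left_diff_distrib mult.commute)
  show "fobj A \<beta> v = qform A v / 2 + \<beta> / 2 * norm4_4 v" by (simp add: fobj_def)
  show "fobj A \<beta> z = qform A z / 2 + \<beta> / 2 * norm4_4 z" by (simp add: fobj_def)
qed

lemma tangent_inner: "tangent z v \<longleftrightarrow> v \<bullet> z = 0"
  unfolding tangent_def inner_eq Re_sum ..

lemma aux_div:
  fixes N q Q q0 Q0 \<beta> :: real
  assumes "N > 0"
  shows "2 * N^2 * ((1/N) * q / 2 + \<beta> / 2 * ((1/N^2) * Q) - (q0 / 2 + \<beta> / 2 * Q0))
       = N * q + \<beta> * Q - N^2 * (q0 + \<beta> * Q0)"
  using assms by (simp add: field_simps power2_eq_square)

lemma lemC:
  assumes "hermitian A" "stationary A \<beta> z" "tangent z v" "norm v = 1"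
  shows "2 * (1+s^2)^2 * (fobj A \<beta> ((1 / sqrt (1+s^2)) *\<^sub>R (z + s *\<^sub>R v)) - fobj A \<beta> z)
   = s^2 * Hf A \<beta> z v + 4 * s^3 * H3 \<beta> z v + 2 * s^4 * (fobj A \<beta> v - fobj A \<beta> z)"
proof -
  have p: "1 + s^2 > 0" by (simp add: add_pos_nonneg)
  have c2: "(1 / sqrt (1+s^2))^2 = 1 / (1+s^2)" using p by (simp add: power_divide)
  have c4: "(1 / sqrt (1+s^2))^4 = 1 / (1+s^2)^2"
    using c2 by (metis (no_types) power_one_over numeral_Bit0 power_add power2_eq_square power_divide)
  have "2 * (1+s^2)^2 * (fobj A \<beta> ((1 / sqrt (1+s^2)) *\<^sub>R (z + s *\<^sub>R v)) - fobj A \<beta> z)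
     = (1+s^2) * qform A (z + s *\<^sub>R v) + \<beta> * norm4_4 (z + s *\<^sub>R v)
     - (1+s^2)^2 * (qform A z + \<beta> * norm4_4 z)"
    unfolding fobj_def qform_scale norm4_scale c2 c4 using aux_div[OF p] by simp
  also have "\<dots> = s^2 * Hf A \<beta> z v + 4 * s^3 * H3 \<beta> z v + 2 * s^4 * (fobj A \<beta> v - fobj A \<beta> z)"
    by (rule lemB[OF assms])
  finally show ?thesis .
qed

lemma G_scale:
  assumes "s \<noteq> 0"
  shows "s^2 * Hf A \<beta> z v + 4 * s^3 * H3 \<beta> z v + 2 * s^4 * (fobj A \<beta> v - fobj A \<beta> z)
     = s^4 * Gfun A \<beta> z v (1/s)"
  unfolding Gfun_def using assms
  by (simp add: field_simps power2_eq_square power3_eq_cube power4_eq_xxxx)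

lemma norm_u:
  fixes z v :: "complex^'n"
  assumes "norm z = 1" "norm v = 1" "v \<bullet> z = 0"
  shows "norm (z + s *\<^sub>R v) ^ 2 = 1 + s^2"
proof -
  have "z \<bullet> z = 1" "v \<bullet> v = 1" using assms(1,2) power2_norm_eq_inner[of z] power2_norm_eq_inner[of v] by simp_all
  then show ?thesis unfolding power2_norm_eq_inner using assms(3)
    by (simp add: inner_add_left inner_add_right inner_commute power2_eq_square)
qed

lemma sqrt_bound: "2 - 2 * (1 / sqrt (1 + x)) \<le> (x::real)" if "x \<ge> 0"
proof -
  have q: "sqrt (1+x) \<le> 1 + x/2"
    by (rule real_le_lsqrt) (use that in \<open>auto simp: power2_eq_square algebra_simps\<close>)
  have sp: "sqrt (1+x) \<ge> 1" using that by simp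
  have "2 - 2 / sqrt (1+x) = 2 * (sqrt (1+x) - 1) / sqrt (1+x)" using sp by (simp add: field_simps)
  also have "\<dots> \<le> 2 * (sqrt (1+x) - 1) / 1"
    by (rule divide_left_mono) (use sp in auto)
  also have "\<dots> \<le> x" using q by simp
  finally show ?thesis by simp
qed

theorem theorem2:
  fixes A :: "complex^'n^'n" and \<beta> :: real and z :: "complex^'n"
  assumes "hermitian A" and "\<beta> > 0" and "stationary A \<beta> z"
  shows "local_min_sphere A \<beta> z \<longleftrightarrow>
    (\<exists>M>0. \<forall>v t. tangent z v \<and> norm v = 1 \<and> \<bar>t\<bar> \<ge> M \<longrightarrow> Gfun A \<beta> z v t \<ge> 0)"
proof
  have z1: "norm z = 1" using assms(3) unfolding stationary_def by simp
  have zz: "z \<bullet> z = 1" using z1 power2_norm_eq_inner[of z] by simp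
  {
    assume "local_min_sphere A \<beta> z"
    then obtain \<epsilon> where ep: "\<epsilon> > 0" and lm: "\<And>w. norm w = 1 \<Longrightarrow> dist w z < \<epsilon> \<Longrightarrow> fobj A \<beta> z \<le> fobj A \<beta> w"
      unfolding local_min_sphere_def by blast
    show "\<exists>M>0. \<forall>v t. tangent z v \<and> norm v = 1 \<and> \<bar>t\<bar> \<ge> M \<longrightarrow> Gfun A \<beta> z v t \<ge> 0"
    proof (intro exI[of _ "2/\<epsilon>"] conjI allI impI)
      show "2/\<epsilon> > 0" using ep by simp
      fix v and t :: real
      assume h: "tangent z v \<and> norm v = 1 \<and> 2/\<epsilon> \<le> \<bar>t\<bar>"
      have tv: "tangent z v" and v1: "norm v = 1" and tM: "2/\<epsilon> \<le> \<bar>t\<bar>" using h by auto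
      have e2: "2/\<epsilon> > 0" using ep by simp
      have tpos: "\<bar>t\<bar> > 0" using tM e2 by linarith
      define s where "s = 1 / t"
      have s0: "s \<noteq> 0" using tpos by (simp add: s_def)
      have ts: "t = 1/s" by (simp add: s_def)
      define c where "c = 1 / sqrt (1+s^2)"
      define w where "w = c *\<^sub>R (z + s *\<^sub>R v)"
      have vz: "v \<bullet> z = 0" using tv tangent_inner by blast
      have "norm (z + s *\<^sub>R v) = sqrt ((norm (z + s *\<^sub>R v))^2)" by simp
      then have nu: "norm (z + s *\<^sub>R v) = sqrt (1 + s^2)"
        unfolding norm_u[OF z1 v1 vz, of s] .
      have cpos: "c > 0" unfolding c_def by (simp add: add_pos_nonneg)
      have ne: "1 + s^2 \<noteq> 0" by (smt (verit) zero_le_power2)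
      have w1: "norm w = 1" unfolding w_def c_def using nu ne by simp
      have zv: "z \<bullet> v = 0" using vz by (simp add: inner_commute)
      have wz: "w \<bullet> z = c" unfolding w_def using zz vz zv
        by (simp add: inner_add_left inner_add_right)
      have "(dist w z)^2 = 2 - 2 * c"
        unfolding dist_norm power2_norm_eq_inner using w1 zz wz power2_norm_eq_inner[of w]
        by (simp add: inner_diff_left inner_diff_right inner_commute)
      also have "\<dots> \<le> s^2" unfolding c_def by (rule sqrt_bound) simp
      also have "s^2 = 1 / t^2" by (simp add: s_def power_divide)
      also have "\<dots> \<le> 1 / (2/\<epsilon>)^2"
      proof -
        have "(2/\<epsilon>)^2 \<le> \<bar>t\<bar>^2" using power_mono[OF tM, of 2] e2 by simp
        then have "(2/\<epsilon>)^2 \<le> t^2" by simp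
        then show ?thesis using e2 tpos by (intro divide_left_mono) auto
      qed
      also have "\<dots> = \<epsilon>^2 / 4" by (simp add: power_divide)
      also have "\<dots> < \<epsilon>^2" using ep by simp
      finally have dd: "(dist w z)^2 < \<epsilon>^2" .
      have "dist w z < \<epsilon>" by (rule power_less_imp_less_base[OF dd]) (use ep in simp)
      then have "fobj A \<beta> z \<le> fobj A \<beta> w" using lm w1 by blast
      then have "0 \<le> 2 * (1+s^2)^2 * (fobj A \<beta> w - fobj A \<beta> z)" by simp
      also have "\<dots> = s^4 * Gfun A \<beta> z v t"
        unfolding w_def c_def lemC[OF assms(1,3) tv v1] G_scale[OF s0] ts ..
      finally show "Gfun A \<beta> z v t \<ge> 0" using s0 by (simp add: zero_le_mult_iff)
    qed
  }
  {
    assume "\<exists>M>0. \<forall>v t. tangent z v \<and> norm v = 1 \<and> \<bar>t\<bar> \<ge> M \<longrightarrow> Gfun A \<beta> z v t \<ge> 0"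
    then obtain M where M0: "M > 0" and G: "\<And>v t. tangent z v \<Longrightarrow> norm v = 1 \<Longrightarrow> \<bar>t\<bar> \<ge> M \<Longrightarrow> Gfun A \<beta> z v t \<ge> 0"
      by blast
    define \<epsilon> where "\<epsilon> = min 1 (1/(2*M))"
    have ep: "\<epsilon> > 0" unfolding \<epsilon>_def using M0 by simp
    show "local_min_sphere A \<beta> z" unfolding local_min_sphere_def
    proof (intro conjI exI[of _ \<epsilon>] allI impI)
      show "norm z = 1" by (rule z1)
      show "\<epsilon> > 0" by (rule ep)
      fix w assume h: "norm w = 1 \<and> dist w z < \<epsilon>"
      have w1: "norm w = 1" and dw: "dist w z < \<epsilon>" using h by auto
      have ww: "w \<bullet> w = 1" using w1 power2_norm_eq_inner[of w] by simp
      define c where "c = w \<bullet> z"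
      define d where "d = dist w z"
      have d2: "d^2 = 2 - 2 * c"
        unfolding d_def c_def dist_norm power2_norm_eq_inner using ww zz
        by (simp add: inner_diff_left inner_diff_right inner_commute)
      have d0: "d \<ge> 0" "d < 1" "d < 1/(2*M)" using dw unfolding d_def \<epsilon>_def by auto
      have "d^2 < 1" using d0 by (simp add: power_less_one_iff abs_less_iff)
      then have c12: "c > 1/2" using d2 by simp
      define u where "u = (1/c) *\<^sub>R w"
      define y where "y = u - z"
      define s where "s = norm y"
      have yz: "y \<bullet> z = 0" unfolding y_def u_def using c12 zz
        by (simp add: inner_diff_left c_def)
      show "fobj A \<beta> z \<le> fobj A \<beta> w"
      proof (cases "s = 0")
        case True
        then have "u = z" unfolding s_def y_def by simp
        moreover have "w = c *\<^sub>R u" unfolding u_def using c12 by simp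
        ultimately have "w = c *\<^sub>R z" by simp
        then have "norm w = \<bar>c\<bar>" using z1 by simp
        then have "c = 1" using w1 c12 by simp
        then have "w = z" using \<open>w = c *\<^sub>R z\<close> by simp
        then show ?thesis by simp
      next
        case False
        then have spos: "s > 0" unfolding s_def by simp
        define v where "v = (1/s) *\<^sub>R y"
        have v1: "norm v = 1" unfolding v_def s_def using False s_def by simp
        have vz: "v \<bullet> z = 0" unfolding v_def using yz by simp
        have tv: "tangent z v" using vz tangent_inner by blast
        have uzv: "u = z + s *\<^sub>R v" unfolding v_def y_def using spos by simp
        have nu: "norm u = 1 / c" unfolding u_def using w1 c12 by simp
        have "(1/c)^2 = 1 + s^2" using norm_u[OF z1 v1 vz, of s] nu uzv by simp
        then have "sqrt (1 + s^2) = sqrt ((1/c)^2)" by simp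
        also have "\<dots> = 1/c" using c12 by simp
        finally have "sqrt (1 + s^2) = 1/c" .
        then have cs: "c = 1 / sqrt (1 + s^2)" using c12 by simp
        have wform: "w = (1 / sqrt (1+s^2)) *\<^sub>R (z + s *\<^sub>R v)"
          unfolding cs[symmetric] uzv[symmetric] u_def using c12 by simp
        have "s^2 = (1 - c^2) / c^2" using \<open>(1/c)^2 = 1 + s^2\<close> c12 by (simp add: field_simps power_divide)
        also have "\<dots> \<le> 4 * (1 - c^2)"
        proof -
          have c1: "c \<le> 1" using d2 zero_le_power2[of d] by linarith
          have "c^2 \<le> 1^2" using power_mono[OF c1, of 2] c12 by simp
          then have "1 - c^2 \<ge> 0" by simp
          moreover have "1/c^2 \<le> 4"
          proof -
            have "(1/2)^2 \<le> c^2" using power_mono[of "1/2" c 2] c12 by simp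
            then have "1/c^2 \<le> 1/(1/2)^2" using c12 by (intro divide_left_mono) auto
            then show ?thesis by (simp add: power_divide)
          qed
          ultimately have "(1 - c^2) * (1/c^2) \<le> (1 - c^2) * 4" by (metis mult_left_mono)
          then show ?thesis by simp
        qed
        also have "\<dots> \<le> 4 * d^2"
        proof -
          have c1: "c \<le> 1" using d2 zero_le_power2[of d] by linarith
          have "1 - c^2 = ((2 - 2 * c)/2) * (1 + c)" by (simp add: power2_eq_square algebra_simps)
          also have "\<dots> = (d^2/2) * (1 + c)" by (simp only: d2)
          finally have "1 - c^2 = (d^2/2) * (1 + c)" .
          also have "\<dots> \<le> (d^2/2) * 2" using c1 by (intro mult_left_mono) auto
          finally show ?thesis by simp
        qed
        also have "\<dots> < (1/M)^2"
        proof -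
          have "2 * d < 1/M" using d0(3) M0 by (simp add: field_simps)
          then have "(2*d)^2 < (1/M)^2" using d0(1) by (intro power_strict_mono) auto
          then show ?thesis by (simp add: power_mult_distrib)
        qed
        finally have ss: "s^2 < (1/M)^2" .
        have "s < 1/M" by (rule power_less_imp_less_base[OF ss]) (use M0 in simp)
        then have "\<bar>1/s\<bar> \<ge> M" using spos M0 by (simp add: field_simps)
        then have "Gfun A \<beta> z v (1/s) \<ge> 0" using G tv v1 by blast
        then have "0 \<le> s^4 * Gfun A \<beta> z v (1/s)" by simp
        also have "\<dots> = 2 * (1+s^2)^2 * (fobj A \<beta> w - fobj A \<beta> z)"
          unfolding wform lemC[OF assms(1,3) tv v1] G_scale[OF False] ..
        moreover have "1 + s^2 \<noteq> 0" using zero_le_power2[of s] by linarith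
        ultimately show ?thesis by (simp add: zero_le_mult_iff)
      qed
    qed
  }
qed

end
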